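(* The closure, in the norm of $C_0^2(\Omega,\mathcal{S}^{d\times d})$, of the set $$\{\phi\in C_c^\infty(\Omega,\mathcal{S}^{d\times d}):\ |\phi(x)|_r\le\alpha_0(x),\ |\operatorname{div}\phi(x)|_r\le\alpha_1(x)\ \forall x\in\Omega\}$$ equals the set $$\{\psi\in C_0^2(\Omega,\mathcal{S}^{d\times d}):\ |\psi(x)|_r\le\alpha_0(x),\ |\operatorname{div}\psi(x)|_r\le\alpha_1(x)\ \forall x\in\Omega\}.$$
   Context: Let $d\ge 2$ and let $\Omega\subset\mathbb{R}^d$ be a bounded open set with Lipschitz boundary. $\mathcal{S}^{d\times d}$ denotes the space of real symmetric $d\times d$ matrices. Fix $1\le r\le\infty$; $|\cdot|_r$ denotes the $\ell^r$ norm on $\mathbb{R}^d$ and the $\ell^r$ norm of the entries on $\mathcal{S}^{d\times d}$. For $\phi$ with values in $\mathcal{S}^{d\times d}$, $(\operatorname{div}\phi)_i=\sum_{j=1}^d\partial_{x_j}\phi_{ij}$. Let $\alpha_0,\alpha_1\in C(\overline\Omega)$ with $\alpha_0(x),\alpha_1(x)>\underline\alpha$ for all $x\in\Omega$, for some constant $\underline\alpha>0$. $C_0^2(\Omega,\mathcal{S}^{d\times d})$ denotes the closure of $C_c^\infty(\Omega,\mathcal{S}^{d\times d})$ with respect to the norm $\|\phi\|_{C^2}=\sum_{|\beta|\le 2}\sup_{x\in\Omega}|\partial^\beta\phi(x)|$. *)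

theory Defs
  imports "HOL-Analysis.Analysis" "HOL-Library.Multiset"
begin

definition pd :: "'n::finite \<Rightarrow> (real^'n \<Rightarrow> 'b::real_normed_vector) \<Rightarrow> real^'n \<Rightarrow> 'b" where
  "pd j f x = vector_derivative (\<lambda>t. f (x + t *\<^sub>R axis j 1)) (at 0)"

fun dpart :: "'n::finite list \<Rightarrow> (real^'n \<Rightarrow> 'b::real_normed_vector) \<Rightarrow> real^'n \<Rightarrow> 'b" where
  "dpart [] f = f"
| "dpart (j # js) f = pd j (dpart js f)"

text \<open>Multi-index derivative; a multi-index beta is a multiset of directions, |beta| = size beta.\<close>
definition pdm :: "'n::finite multiset \<Rightarrow> (real^'n \<Rightarrow> 'b::real_normed_vector) \<Rightarrow> real^'n \<Rightarrow> 'b" where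
  "pdm \<beta> f = dpart (SOME js. mset js = \<beta>) f"

definition Ck_on :: "nat \<Rightarrow> (real^'n::finite) set \<Rightarrow> (real^'n \<Rightarrow> 'b::real_normed_vector) \<Rightarrow> bool" where
  "Ck_on k \<Omega> f \<longleftrightarrow>
     (\<forall>js. length js \<le> k \<longrightarrow> continuous_on \<Omega> (dpart js f)) \<and>
     (\<forall>js j x. length js < k \<longrightarrow> x \<in> \<Omega> \<longrightarrow>
        (\<lambda>t. dpart js f (x + t *\<^sub>R axis j 1)) differentiable (at 0))"

definition smooth_on :: "(real^'n::finite) set \<Rightarrow> (real^'n \<Rightarrow> 'b::real_normed_vector) \<Rightarrow> bool" where
  "smooth_on \<Omega> f \<longleftrightarrow> (\<forall>k. Ck_on k \<Omega> f)"

definition sym_valued :: "(real^'n::finite) set \<Rightarrow> (real^'n \<Rightarrow> real^'n^'n) \<Rightarrow> bool" where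
  "sym_valued \<Omega> \<phi> \<longleftrightarrow> (\<forall>x\<in>\<Omega>. transpose (\<phi> x) = \<phi> x)"

definition Cc_inf :: "(real^'n::finite) set \<Rightarrow> (real^'n \<Rightarrow> real^'n^'n) \<Rightarrow> bool" where
  "Cc_inf \<Omega> \<phi> \<longleftrightarrow> smooth_on \<Omega> \<phi> \<and> sym_valued \<Omega> \<phi> \<and>
     compact (closure {x\<in>\<Omega>. \<phi> x \<noteq> 0}) \<and> closure {x\<in>\<Omega>. \<phi> x \<noteq> 0} \<subseteq> \<Omega>"

definition c2norm :: "(real^'n::finite) set \<Rightarrow> (real^'n \<Rightarrow> 'b::real_normed_vector) \<Rightarrow> ennreal" where
  "c2norm \<Omega> f = (\<Sum>\<beta>\<in>{\<beta>::'n multiset. size \<beta> \<le> 2}. SUP x\<in>\<Omega>. ennreal (norm (pdm \<beta> f x)))"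

definition C02 :: "(real^'n::finite) set \<Rightarrow> (real^'n \<Rightarrow> real^'n^'n) \<Rightarrow> bool" where
  "C02 \<Omega> \<psi> \<longleftrightarrow> Ck_on 2 \<Omega> \<psi> \<and> sym_valued \<Omega> \<psi> \<and>
     (\<exists>\<phi>. (\<forall>k. Cc_inf \<Omega> (\<phi> k)) \<and> ((\<lambda>k. c2norm \<Omega> (\<lambda>x. \<phi> k x - \<psi> x)) \<longlonglongrightarrow> 0))"

definition c2closure :: "(real^'n::finite) set \<Rightarrow> (real^'n \<Rightarrow> real^'n^'n) set \<Rightarrow> (real^'n \<Rightarrow> real^'n^'n) set" where
  "c2closure \<Omega> S = {\<psi>. C02 \<Omega> \<psi> \<and>
     (\<exists>\<phi>. (\<forall>k. \<phi> k \<in> S) \<and> ((\<lambda>k. c2norm \<Omega> (\<lambda>x. \<phi> k x - \<psi> x)) \<longlonglongrightarrow> 0))}"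

definition divm :: "(real^'n::finite \<Rightarrow> real^'n^'n) \<Rightarrow> real^'n \<Rightarrow> real^'n" where
  "divm \<phi> x = (\<chi> i. \<Sum>j\<in>UNIV. pd j \<phi> x $ i $ j)"

definition lr_vec :: "ereal \<Rightarrow> real^'n::finite \<Rightarrow> real" where
  "lr_vec r v = (if r = \<infinity> then Max (range (\<lambda>i. \<bar>v $ i\<bar>))
     else (\<Sum>i\<in>UNIV. \<bar>v $ i\<bar> powr real_of_ereal r) powr (1 / real_of_ereal r))"

definition lr_mat :: "ereal \<Rightarrow> real^'n::finite^'n \<Rightarrow> real" where
  "lr_mat r A = (if r = \<infinity> then Max (range (\<lambda>(i,j). \<bar>A $ i $ j\<bar>))
     else (\<Sum>(i,j)\<in>UNIV. \<bar>A $ i $ j\<bar> powr real_of_ereal r) powr (1 / real_of_ereal r))"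

text \<open>Lipschitz boundary (strong Lipschitz / local graph condition, coordinate free):
  near each boundary point, after choosing a unit direction e, Omega is the region
  below the graph of a Lipschitz function g of the coordinates orthogonal to e.\<close>
definition lipschitz_boundary :: "(real^'n::finite) set \<Rightarrow> bool" where
  "lipschitz_boundary \<Omega> \<longleftrightarrow> (\<forall>x\<in>frontier \<Omega>. \<exists>\<rho>>0. \<exists>e g L.
     norm e = 1 \<and> L-lipschitz_on UNIV g \<and> (\<forall>y t. g (y + t *\<^sub>R e) = g y) \<and>
     \<Omega> \<inter> ball x \<rho> = {y\<in>ball x \<rho>. y \<bullet> e < g y})"

end

theory Submission
  imports Defs
begin


lemma line_open:
  fixes x v :: "real^'n::finite"
  assumes "open U" shows "open {t::real. x + t *\<^sub>R v \<in> U}"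
proof -
  have "continuous_on UNIV (\<lambda>t::real. x + t *\<^sub>R v)" by (intro continuous_intros)
  then show ?thesis using assms open_vimage[of U "\<lambda>t::real. x + t *\<^sub>R v"] by (simp add: vimage_def)
qed

lemma line_hvd_local:
  fixes F G :: "real^'n::finite \<Rightarrow> 'b::real_normed_vector"
  assumes "open U" "x \<in> U" "\<forall>y\<in>U. F y = G y"
    and "((\<lambda>t. F (x + t *\<^sub>R v)) has_vector_derivative D) (at 0)"
  shows "((\<lambda>t. G (x + t *\<^sub>R v)) has_vector_derivative D) (at 0)"
  apply (rule has_vector_derivative_transform_within_open[OF assms(4) line_open[OF assms(1), of x v]])
  using assms by auto

lemma pd_local:
  fixes F G :: "real^'n::finite \<Rightarrow> 'b::real_normed_vector"
  assumes "open U" "x \<in> U" "\<forall>y\<in>U. F y = G y"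
  shows "pd j F x = pd j G x"
proof -
  have "\<And>D. ((\<lambda>t. F (x + t *\<^sub>R axis j 1)) has_vector_derivative D) (at 0) \<longleftrightarrow>
            ((\<lambda>t. G (x + t *\<^sub>R axis j 1)) has_vector_derivative D) (at 0)"
    using line_hvd_local[OF assms] line_hvd_local[OF assms(1,2), of G F] assms(3) by metis
  then show ?thesis unfolding pd_def vector_derivative_def by simp
qed

lemma line_diff_local:
  fixes F G :: "real^'n::finite \<Rightarrow> 'b::real_normed_vector"
  assumes "open U" "x \<in> U" "\<forall>y\<in>U. F y = G y"
    and "(\<lambda>t. F (x + t *\<^sub>R v)) differentiable (at 0)"
  shows "(\<lambda>t. G (x + t *\<^sub>R v)) differentiable (at 0)"
  using line_hvd_local[OF assms(1-3)] assms(4) vector_derivative_works differentiableI_vector by metis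

lemma pd_lin:
  fixes F G :: "real^'n::finite \<Rightarrow> 'b::real_normed_vector"
  assumes "(\<lambda>t. F (x + t *\<^sub>R axis j 1)) differentiable (at 0)"
    "(\<lambda>t. G (x + t *\<^sub>R axis j 1)) differentiable (at 0)"
  shows "pd j (\<lambda>y. a *\<^sub>R F y + b *\<^sub>R G y) x = a *\<^sub>R pd j F x + b *\<^sub>R pd j G x"
  unfolding pd_def
  apply (rule vector_derivative_at)
  using assms unfolding vector_derivative_works
  by (auto intro!: derivative_eq_intros)

lemma line_diff_lin:
  fixes F G :: "real^'n::finite \<Rightarrow> 'b::real_normed_vector"
  assumes "(\<lambda>t. F (x + t *\<^sub>R v)) differentiable (at 0)"
    "(\<lambda>t. G (x + t *\<^sub>R v)) differentiable (at 0)"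
  shows "(\<lambda>t. a *\<^sub>R F (x + t *\<^sub>R v) + b *\<^sub>R G (x + t *\<^sub>R v)) differentiable (at 0)"
  using assms by (intro derivative_intros) 

lemma dpart_lin:
  fixes f g :: "real^'n::finite \<Rightarrow> 'b::real_normed_vector"
  assumes "open \<Omega>" "Ck_on k \<Omega> f" "Ck_on k \<Omega> g" "length js \<le> k" "x \<in> \<Omega>"
  shows "dpart js (\<lambda>y. a *\<^sub>R f y + b *\<^sub>R g y) x = a *\<^sub>R dpart js f x + b *\<^sub>R dpart js g x"
  using assms(4,5)
proof (induction js arbitrary: x)
  case Nil
  then show ?case by simp
next
  case (Cons j js)
  have IH: "\<forall>y\<in>\<Omega>. dpart js (\<lambda>y. a *\<^sub>R f y + b *\<^sub>R g y) y = a *\<^sub>R dpart js f y + b *\<^sub>R dpart js g y"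
    using Cons by auto
  have "dpart (j # js) (\<lambda>y. a *\<^sub>R f y + b *\<^sub>R g y) x = pd j (\<lambda>y. a *\<^sub>R dpart js f y + b *\<^sub>R dpart js g y) x"
    using pd_local[OF assms(1) Cons.prems(2) IH] by simp
  also have "\<dots> = a *\<^sub>R dpart (j#js) f x + b *\<^sub>R dpart (j#js) g x"
    using assms(2,3) Cons.prems unfolding Ck_on_def by (simp add: pd_lin)
  finally show ?case .
qed

lemma Ck_on_lin:
  fixes f g :: "real^'n::finite \<Rightarrow> 'b::real_normed_vector"
  assumes "open \<Omega>" "Ck_on k \<Omega> f" "Ck_on k \<Omega> g"
  shows "Ck_on k \<Omega> (\<lambda>y. a *\<^sub>R f y + b *\<^sub>R g y)"
  unfolding Ck_on_def
proof (intro conjI allI impI)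
  fix js :: "'n list" assume js: "length js \<le> k"
  have "continuous_on \<Omega> (\<lambda>y. a *\<^sub>R dpart js f y + b *\<^sub>R dpart js g y)"
    using assms js unfolding Ck_on_def by (intro continuous_intros) auto
  then show "continuous_on \<Omega> (dpart js (\<lambda>y. a *\<^sub>R f y + b *\<^sub>R g y))"
    using dpart_lin[OF assms js] by (metis (no_types, lifting) continuous_on_cong)
next
  fix js :: "'n list" and j x assume js: "length js < k" and x: "x \<in> \<Omega>"
  have "(\<lambda>t. a *\<^sub>R dpart js f (x + t *\<^sub>R axis j 1) + b *\<^sub>R dpart js g (x + t *\<^sub>R axis j 1)) differentiable (at 0)"
    using assms js x unfolding Ck_on_def by (intro line_diff_lin) auto
  then show "(\<lambda>t. dpart js (\<lambda>y. a *\<^sub>R f y + b *\<^sub>R g y) (x + t *\<^sub>R axis j 1)) differentiable (at 0)"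
    using line_diff_local[OF assms(1) x, of "\<lambda>y. a *\<^sub>R dpart js f y + b *\<^sub>R dpart js g y"
        "dpart js (\<lambda>y. a *\<^sub>R f y + b *\<^sub>R g y)"] dpart_lin[OF assms, of js] js by auto
qed



lemma finite_msets2: "finite {\<beta>::'n::finite multiset. size \<beta> \<le> 2}"
proof -
  have "{\<beta>::'n multiset. size \<beta> \<le> 2} \<subseteq> mset ` {xs. set xs \<subseteq> UNIV \<and> length xs \<le> 2}"
  proof
    fix \<beta> :: "'n multiset" assume "\<beta> \<in> {\<beta>. size \<beta> \<le> 2}"
    moreover obtain xs where "mset xs = \<beta>" using ex_mset by blast
    ultimately show "\<beta> \<in> mset ` {xs. set xs \<subseteq> UNIV \<and> length xs \<le> 2}" by auto
  qed
  moreover have "finite {xs::'n list. set xs \<subseteq> UNIV \<and> length xs \<le> 2}"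
    by (rule finite_lists_length_le) simp
  ultimately show ?thesis using finite_surj by blast
qed

lemma pdm_some: "mset (SOME js. mset js = \<beta>) = \<beta>"
  by (rule someI_ex) (rule ex_mset)

lemma pdm_lin:
  fixes f g :: "real^'n::finite \<Rightarrow> 'b::real_normed_vector"
  assumes "open \<Omega>" "Ck_on 2 \<Omega> f" "Ck_on 2 \<Omega> g" "size \<beta> \<le> 2" "x \<in> \<Omega>"
  shows "pdm \<beta> (\<lambda>y. a *\<^sub>R f y + b *\<^sub>R g y) x = a *\<^sub>R pdm \<beta> f x + b *\<^sub>R pdm \<beta> g x"
proof -
  have "length (SOME js. mset js = \<beta>) \<le> 2"
    using assms(4) pdm_some[of \<beta>] by (metis size_mset)
  then show ?thesis unfolding pdm_def using dpart_lin[OF assms(1-3) _ assms(5)] by blast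
qed

lemma pdm_empty: "pdm {#} f = f"
  using pdm_some[of "{#}"] unfolding pdm_def by simp

lemma pdm_single: "pdm {#j#} f = pd j f"
proof -
  have "(SOME js. mset js = {#j#}) = [j]"
    using pdm_some[of "{#j#}"] by simp
  then show ?thesis unfolding pdm_def by simp
qed

lemma c2norm_ge:
  assumes "size \<beta> \<le> 2" "x \<in> \<Omega>"
  shows "ennreal (norm (pdm \<beta> f x)) \<le> c2norm \<Omega> f"
proof -
  have "ennreal (norm (pdm \<beta> f x)) \<le> (SUP x\<in>\<Omega>. ennreal (norm (pdm \<beta> f x)))"
    using assms(2) by (rule SUP_upper)
  also have "\<dots> \<le> c2norm \<Omega> f" unfolding c2norm_def
    by (rule member_le_sum[where f="\<lambda>\<beta>. SUP x\<in>\<Omega>. ennreal (norm (pdm \<beta> f x))"])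
       (use assms finite_msets2 in auto)
  finally show ?thesis .
qed

lemma c2norm_le:
  fixes h f g :: "real^'n::finite \<Rightarrow> 'b::real_normed_vector"
  assumes "0 \<le> c"
    and "\<And>\<beta> x. size \<beta> \<le> 2 \<Longrightarrow> x \<in> \<Omega> \<Longrightarrow> norm (pdm \<beta> h x) \<le> norm (pdm \<beta> f x) + c * norm (pdm \<beta> g x)"
  shows "c2norm \<Omega> h \<le> c2norm \<Omega> f + ennreal c * c2norm \<Omega> g"
proof -
  have "\<And>\<beta>. size \<beta> \<le> 2 \<Longrightarrow> (SUP x\<in>\<Omega>. ennreal (norm (pdm \<beta> h x))) \<le>
      (SUP x\<in>\<Omega>. ennreal (norm (pdm \<beta> f x))) + ennreal c * (SUP x\<in>\<Omega>. ennreal (norm (pdm \<beta> g x)))"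
  proof (rule SUP_least)
    fix \<beta> :: "'n multiset" and x assume b: "size \<beta> \<le> 2" and x: "x \<in> \<Omega>"
    have "ennreal (norm (pdm \<beta> h x)) \<le> ennreal (norm (pdm \<beta> f x) + c * norm (pdm \<beta> g x))"
      using assms(2)[OF b x] by (simp add: ennreal_leI)
    also have "\<dots> = ennreal (norm (pdm \<beta> f x)) + ennreal c * ennreal (norm (pdm \<beta> g x))"
      using assms(1) by (simp add: ennreal_plus ennreal_mult)
    also have "\<dots> \<le> (SUP x\<in>\<Omega>. ennreal (norm (pdm \<beta> f x))) + ennreal c * (SUP x\<in>\<Omega>. ennreal (norm (pdm \<beta> g x)))"
      using x by (intro add_mono mult_left_mono SUP_upper) auto
    finally show "ennreal (norm (pdm \<beta> h x)) \<le> \<dots>" .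
  qed
  then show ?thesis unfolding c2norm_def sum_distrib_left sum.distrib[symmetric]
    by (intro sum_mono) auto
qed

lemma Cc_inf_bounded:
  assumes "open \<Omega>" "Cc_inf \<Omega> \<phi>"
  shows "bounded (dpart js \<phi> ` \<Omega>)"
proof -
  define K where "K = closure {x\<in>\<Omega>. \<phi> x \<noteq> 0}"
  have K: "compact K" "K \<subseteq> \<Omega>" using assms(2) unfolding Cc_inf_def K_def by auto
  have sm: "\<And>k. Ck_on k \<Omega> \<phi>" using assms(2) unfolding Cc_inf_def smooth_on_def by auto
  have cont: "continuous_on \<Omega> (dpart js \<phi>)" using sm[of "length js"] unfolding Ck_on_def by auto
  have b1: "bounded (dpart js \<phi> ` K)"
    using compact_continuous_image[OF continuous_on_subset[OF cont K(2)] K(1)] compact_imp_bounded by blast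
  have U: "open (\<Omega> - K)" using assms(1) K_def by auto
  have z: "\<forall>y\<in>\<Omega> - K. dpart js' \<phi> y = 0" for js'
  proof (induction js')
    case Nil
    then show ?case unfolding K_def using closure_subset[of "{x\<in>\<Omega>. \<phi> x \<noteq> 0}"] by auto
  next
    case (Cons j js')
    show ?case
    proof
      fix y assume y: "y \<in> \<Omega> - K"
      have "dpart (j # js') \<phi> y = pd j (\<lambda>_. 0) y" using pd_local[OF U y Cons] by simp
      also have "\<dots> = 0" unfolding pd_def by (simp add: vector_derivative_at)
      finally show "dpart (j # js') \<phi> y = 0" .
    qed
  qed
  have "dpart js \<phi> ` \<Omega> \<subseteq> insert 0 (dpart js \<phi> ` K)" using z by auto
  then show ?thesis using b1 bounded_subset bounded_insert by metis
qed

lemma Cc_inf_c2norm_finite: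
  fixes \<phi> :: "real^'n::finite \<Rightarrow> real^'n^'n"
  assumes "open \<Omega>" "Cc_inf \<Omega> \<phi>"
  shows "c2norm \<Omega> \<phi> < top"
proof -
  have "\<And>\<beta>. (SUP x\<in>\<Omega>. ennreal (norm (pdm \<beta> \<phi> x))) < top"
  proof -
    fix \<beta> :: "'n multiset"
    obtain B where B: "\<forall>y \<in> pdm \<beta> \<phi> ` \<Omega>. norm y \<le> B"
      using Cc_inf_bounded[OF assms, of "SOME js. mset js = \<beta>"] unfolding bounded_iff pdm_def by blast
    have "(SUP x\<in>\<Omega>. ennreal (norm (pdm \<beta> \<phi> x))) \<le> ennreal B"
      using B by (intro SUP_least) (auto intro: ennreal_leI)
    then show "(SUP x\<in>\<Omega>. ennreal (norm (pdm \<beta> \<phi> x))) < top"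
      using le_less_trans by fastforce
  qed
  then show ?thesis unfolding c2norm_def using finite_msets2 by (subst ennreal_sum_less_top) auto
qed



lemma continuous_on_Max_fam:
  fixes f :: "'i \<Rightarrow> 'a::topological_space \<Rightarrow> real"
  assumes "finite I" "I \<noteq> {}" "\<And>i. i \<in> I \<Longrightarrow> continuous_on S (f i)"
  shows "continuous_on S (\<lambda>x. Max ((\<lambda>i. f i x) ` I))"
  using assms
proof (induction I rule: finite_ne_induct)
  case (singleton i)
  then show ?case by simp
next
  case (insert i I)
  have "continuous_on S (\<lambda>x. max (f i x) (Max ((\<lambda>i. f i x) ` I)))"
    using insert by (intro continuous_on_max) auto
  then show ?case using insert by simp
qed

lemma real_of_ereal_ge1:
  assumes "1 \<le> r" "r \<noteq> \<infinity>" shows "1 \<le> real_of_ereal r"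
  using assms by (cases r) auto

lemma lr_vec_cont:
  assumes "1 \<le> r"
  shows "continuous_on UNIV (lr_vec r :: real^'n::finite \<Rightarrow> real)"
proof (cases "r = \<infinity>")
  case True
  have "continuous_on UNIV (\<lambda>v::real^'n. Max ((\<lambda>i. \<bar>v $ i\<bar>) ` UNIV))"
    by (intro continuous_on_Max_fam continuous_intros) auto
  then show ?thesis unfolding lr_vec_def[abs_def] using True by simp
next
  case False
  define p where "p = real_of_ereal r"
  have p: "1 \<le> p" using real_of_ereal_ge1[OF assms False] p_def by simp
  have "continuous_on UNIV (\<lambda>v::real^'n. (\<Sum>i\<in>UNIV. \<bar>v $ i\<bar> powr p) powr (1 / p))"
    using p by (intro continuous_on_powr' continuous_intros) (auto simp: sum_nonneg)
  then show ?thesis unfolding lr_vec_def[abs_def] using False p_def by simp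
qed

lemma lr_mat_cont:
  assumes "1 \<le> r"
  shows "continuous_on UNIV (lr_mat r :: real^'n::finite^'n \<Rightarrow> real)"
proof (cases "r = \<infinity>")
  case True
  have "continuous_on UNIV (\<lambda>A::real^'n^'n. Max ((\<lambda>q. (case q of (i,j) \<Rightarrow> \<bar>A $ i $ j\<bar>)) ` UNIV))"
    by (intro continuous_on_Max_fam) (auto split: prod.splits intro!: continuous_intros)
  then show ?thesis unfolding lr_mat_def[abs_def] using True by (simp add: case_prod_beta)
next
  case False
  define p where "p = real_of_ereal r"
  have p: "1 \<le> p" using real_of_ereal_ge1[OF assms False] p_def by simp
  have ij: "continuous_on UNIV (\<lambda>A::real^'n^'n. \<bar>A $ fst q $ snd q\<bar> powr p)" for q
    using p by (intro continuous_on_powr' continuous_intros) auto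
  have "continuous_on UNIV (\<lambda>A::real^'n^'n. (\<Sum>q\<in>UNIV. \<bar>A $ fst q $ snd q\<bar> powr p) powr (1 / p))"
    using p by (intro continuous_on_powr' continuous_on_sum ij continuous_intros)
      (auto simp: sum_nonneg)
  then show ?thesis unfolding lr_mat_def[abs_def] using False p_def by (simp add: case_prod_beta)
qed

lemma Max_scale:
  fixes f :: "'i \<Rightarrow> real"
  assumes "finite I" "I \<noteq> {}" "0 \<le> c"
  shows "Max ((\<lambda>i. c * f i) ` I) = c * Max (f ` I)"
  using assms
proof (induction I rule: finite_ne_induct)
  case (singleton x)
  then show ?case by simp
next
  case (insert x F)
  then show ?case by (simp add: max_mult_distrib_left) 
qed

lemma powr_sum_scale:
  fixes a :: "'i \<Rightarrow> real"
  assumes "1 \<le> p" "0 \<le> c" "\<And>i. 0 \<le> a i" "finite I"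
  shows "(\<Sum>i\<in>I. (c * a i) powr p) powr (1/p) = c * (\<Sum>i\<in>I. a i powr p) powr (1/p)"
proof -
  have "(\<Sum>i\<in>I. (c * a i) powr p) = c powr p * (\<Sum>i\<in>I. a i powr p)"
    using assms by (simp add: powr_mult sum_distrib_left)
  then have "(\<Sum>i\<in>I. (c * a i) powr p) powr (1/p) = (c powr p) powr (1/p) * (\<Sum>i\<in>I. a i powr p) powr (1/p)"
    using assms by (simp add: powr_mult sum_nonneg)
  also have "(c powr p) powr (1/p) = c" using assms by (simp add: powr_powr)
  finally show ?thesis .
qed

lemma lr_vec_scale:
  assumes "1 \<le> r" "0 \<le> c"
  shows "lr_vec r (c *\<^sub>R (v::real^'n::finite)) = c * lr_vec r v"
proof (cases "r = \<infinity>")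
  case True
  then show ?thesis unfolding lr_vec_def using assms
    by (simp add: abs_mult Max_scale[of UNIV c "\<lambda>i. \<bar>v $ i\<bar>", simplified] image_image)
next
  case False
  then show ?thesis unfolding lr_vec_def using assms real_of_ereal_ge1[OF assms(1) False]
    using powr_sum_scale[of "real_of_ereal r" c "\<lambda>i. \<bar>v $ i\<bar>" UNIV]
    by (simp add: abs_mult)
qed

lemma lr_mat_scale:
  assumes "1 \<le> r" "0 \<le> c"
  shows "lr_mat r (c *\<^sub>R (A::real^'n::finite^'n)) = c * lr_mat r A"
proof (cases "r = \<infinity>")
  case True
  then show ?thesis unfolding lr_mat_def using assms
    Max_scale[of UNIV c "\<lambda>(i,j). \<bar>A $ i $ j\<bar>", simplified]
    by (simp add: abs_mult image_image case_prod_beta)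
next
  case False
  then show ?thesis unfolding lr_mat_def using assms real_of_ereal_ge1[OF assms(1) False]
    using powr_sum_scale[of "real_of_ereal r" c "\<lambda>(i,j). \<bar>A $ i $ j\<bar>" UNIV]
    by (simp add: abs_mult case_prod_beta)
qed



lemma Ck_on_mono: "Ck_on k \<Omega> f \<Longrightarrow> j \<le> k \<Longrightarrow> Ck_on j \<Omega> f"
  unfolding Ck_on_def by auto

lemma pd_lin_Ck:
  fixes f g :: "real^'n::finite \<Rightarrow> 'b::real_normed_vector"
  assumes "Ck_on 1 \<Omega> f" "Ck_on 1 \<Omega> g" "x \<in> \<Omega>"
  shows "pd j (\<lambda>y. a *\<^sub>R f y + b *\<^sub>R g y) x = a *\<^sub>R pd j f x + b *\<^sub>R pd j g x"
  using assms unfolding Ck_on_def by (intro pd_lin) (metis dpart.simps(1) list.size(3) zero_less_one)+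

lemma divm_lin:
  fixes f g :: "real^'n::finite \<Rightarrow> real^'n^'n"
  assumes "Ck_on 1 \<Omega> f" "Ck_on 1 \<Omega> g" "x \<in> \<Omega>"
  shows "divm (\<lambda>y. a *\<^sub>R f y + b *\<^sub>R g y) x = a *\<^sub>R divm f x + b *\<^sub>R divm g x"
  unfolding divm_def using pd_lin_Ck[OF assms]
  by (simp add: vec_eq_iff sum.distrib sum_distrib_left)

lemma divm_scale:
  fixes f :: "real^'n::finite \<Rightarrow> real^'n^'n"
  assumes "Ck_on 1 \<Omega> f" "x \<in> \<Omega>"
  shows "divm (\<lambda>y. a *\<^sub>R f y) x = a *\<^sub>R divm f x"
  using divm_lin[OF assms(1) assms(1) assms(2), of a 0] by simp

lemma pd_diff_Ck:
  fixes f g :: "real^'n::finite \<Rightarrow> 'b::real_normed_vector"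
  assumes "Ck_on 1 \<Omega> f" "Ck_on 1 \<Omega> g" "x \<in> \<Omega>"
  shows "pd j (\<lambda>y. f y - g y) x = pd j f x - pd j g x"
  using pd_lin_Ck[OF assms, of j 1 "-1"] by simp

lemma divm_bound:
  fixes M :: "'n::finite \<Rightarrow> real^'n^'n"
  assumes "\<And>j. norm (M j) \<le> B"
  shows "norm (\<chi> i. \<Sum>j\<in>UNIV. M j $ i $ j) \<le> real CARD('n) * (real CARD('n) * B)"
proof -
  have "norm (\<chi> i. \<Sum>j\<in>UNIV. M j $ i $ j) \<le> (\<Sum>i\<in>UNIV. \<bar>(\<chi> i. \<Sum>j\<in>UNIV. M j $ i $ j) $ i\<bar>)"
    by (rule norm_le_l1_cart)
  also have "\<dots> \<le> (\<Sum>i\<in>(UNIV::'n set). real CARD('n) * B)"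
  proof (rule sum_mono)
    fix i :: 'n
    have "\<bar>\<Sum>j\<in>UNIV. M j $ i $ j\<bar> \<le> (\<Sum>j\<in>UNIV. \<bar>M j $ i $ j\<bar>)" by (rule sum_abs)
    also have "\<dots> \<le> (\<Sum>j\<in>(UNIV::'n set). B)"
    proof (rule sum_mono)
      fix j
      have "\<bar>M j $ i $ j\<bar> \<le> norm (M j $ i)" by (rule component_le_norm_cart)
      also have "\<dots> \<le> norm (M j)" by (rule Finite_Cartesian_Product.norm_nth_le)
      finally show "\<bar>M j $ i $ j\<bar> \<le> B" using assms[of j] by linarith
    qed
    finally show "\<bar>(\<chi> i. \<Sum>j\<in>UNIV. M j $ i $ j) $ i\<bar> \<le> real CARD('n) * B" by simp
  qed
  finally show ?thesis by simp
qed

lemma divm_diff: "divm f x - divm g x = (\<chi> i. \<Sum>j\<in>UNIV. (pd j f x - pd j g x) $ i $ j)"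
  unfolding divm_def by (simp add: vec_eq_iff sum_subtractf)

lemma ennreal_le_sandwich:
  fixes u :: "nat \<Rightarrow> real"
  assumes "\<And>k. ennreal (u k) \<le> D k" "D \<longlonglongrightarrow> 0" "\<And>k. 0 \<le> u k"
  shows "u \<longlonglongrightarrow> 0"
proof -
  have "(\<lambda>k. ennreal (u k)) \<longlonglongrightarrow> 0"
    by (rule tendsto_sandwich[of "\<lambda>_. 0" _ _ D]) (use assms in auto)
  then have "(\<lambda>k. ennreal (u k)) \<longlonglongrightarrow> ennreal 0" by simp
  then show ?thesis using assms(3) tendsto_ennreal_iff by (metis always_eventually order_refl)
qed

lemma Cc_inf_scale:
  assumes "open \<Omega>" "Cc_inf \<Omega> \<phi>" "c \<noteq> 0"
  shows "Cc_inf \<Omega> (\<lambda>y. c *\<^sub>R \<phi> y)"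
proof -
  have sm: "\<And>k. Ck_on k \<Omega> \<phi>" using assms(2) unfolding Cc_inf_def smooth_on_def by auto
  have "Ck_on k \<Omega> (\<lambda>y. c *\<^sub>R \<phi> y)" for k
    using Ck_on_lin[OF assms(1) sm sm, of k c 0] by simp
  moreover have "{x\<in>\<Omega>. c *\<^sub>R \<phi> x \<noteq> 0} = {x\<in>\<Omega>. \<phi> x \<noteq> 0}" using assms(3) by auto
  ultimately show ?thesis using assms(2) unfolding Cc_inf_def smooth_on_def sym_valued_def
    by (simp add: transpose_scalar)
qed



lemma frac_aux: "0 \<le> K \<Longrightarrow> 0 < d \<Longrightarrow> K * (d / (K + 1)) < (d::real)"
proof -
  assume K: "0 \<le> K" and d: "0 < d"
  have "K * (d / (K + 1)) = d * (K / (K+1))" by simp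
  moreover have "K / (K+1) < 1" using K by simp
  ultimately show ?thesis using d by (metis mult.right_neutral mult_strict_left_mono)
qed

lemma frac_aux2: "0 \<le> K \<Longrightarrow> 0 < d \<Longrightarrow> d / (K + 1) \<le> (d::real)"
  by (simp add: divide_le_eq)

lemma arith_aux:
  fixes a l e :: real
  assumes "l < a" "0 < l" "0 < e" "e < 1"
  shows "(1 - e) * (a + e * l) \<le> a"
proof -
  have eq: "(1-e)*(a+e*l) = a - e*(a-l) - e*e*l" by (simp add: algebra_simps)
  have "0 \<le> e*(a-l)" using assms by simp
  moreover have "0 \<le> e*e*l" using assms by simp
  ultimately show ?thesis using eq by linarith
qed

lemma norm_aux:
  fixes a b :: "'a::real_normed_vector"
  assumes "0 \<le> e" "e \<le> 1"
  shows "norm ((1-e) *\<^sub>R a - b) \<le> norm (a - b) + e * norm b"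
proof -
  have "(1-e) *\<^sub>R a - b = (1-e) *\<^sub>R (a - b) - e *\<^sub>R b" by (simp add: algebra_simps)
  then have "norm ((1-e) *\<^sub>R a - b) \<le> norm ((1-e) *\<^sub>R (a - b)) + norm (e *\<^sub>R b)"
    by (metis norm_triangle_ineq4)
  also have "\<dots> = (1-e) * norm (a - b) + e * norm b" using assms by simp
  also have "\<dots> \<le> norm (a - b) + e * norm b" using assms by (simp add: mult_left_le_one_le)
  finally show ?thesis .
qed

lemma sub_dir:
  fixes \<Omega> :: "(real^'n::finite) set" and r :: ereal and \<alpha>0 \<alpha>1 :: "real^'n \<Rightarrow> real"
  assumes op: "open \<Omega>" and r: "1 \<le> r"
  assumes "\<psi> \<in> c2closure \<Omega> {\<phi>. Cc_inf \<Omega> \<phi> \<and> (\<forall>x\<in>\<Omega>. lr_mat r (\<phi> x) \<le> \<alpha>0 x \<and> lr_vec r (divm \<phi> x) \<le> \<alpha>1 x)}"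
  shows "C02 \<Omega> \<psi> \<and> (\<forall>x\<in>\<Omega>. lr_mat r (\<psi> x) \<le> \<alpha>0 x \<and> lr_vec r (divm \<psi> x) \<le> \<alpha>1 x)"
proof -
  obtain \<phi> where C: "C02 \<Omega> \<psi>"
    and S: "\<forall>k. Cc_inf \<Omega> (\<phi> k) \<and> (\<forall>x\<in>\<Omega>. lr_mat r (\<phi> k x) \<le> \<alpha>0 x \<and> lr_vec r (divm (\<phi> k) x) \<le> \<alpha>1 x)"
    and L: "(\<lambda>k. c2norm \<Omega> (\<lambda>x. \<phi> k x - \<psi> x)) \<longlonglongrightarrow> 0"
    using assms(3) unfolding c2closure_def by auto
  have psi2: "Ck_on 2 \<Omega> \<psi>" using C unfolding C02_def by auto
  have phi2: "Ck_on 2 \<Omega> (\<phi> k)" for k using S unfolding Cc_inf_def smooth_on_def by auto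
  have psi1: "Ck_on 1 \<Omega> \<psi>" using Ck_on_mono[OF psi2] by simp
  have phi1: "Ck_on 1 \<Omega> (\<phi> k)" for k using Ck_on_mono[OF phi2] by simp
  have cm: "isCont (lr_mat r) A" for A :: "real^'n^'n"
    using lr_mat_cont[OF r] continuous_on_eq_continuous_at[OF open_UNIV] by blast
  have cv: "isCont (lr_vec r) v" for v :: "real^'n"
    using lr_vec_cont[OF r] continuous_on_eq_continuous_at[OF open_UNIV] by blast
  have "lr_mat r (\<psi> x) \<le> \<alpha>0 x \<and> lr_vec r (divm \<psi> x) \<le> \<alpha>1 x" if x: "x \<in> \<Omega>" for x
  proof -
    have e0: "ennreal (norm (\<phi> k x - \<psi> x)) \<le> c2norm \<Omega> (\<lambda>x. \<phi> k x - \<psi> x)" for k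
      using c2norm_ge[of "{#}" x \<Omega> "\<lambda>x. \<phi> k x - \<psi> x"] x by (simp add: pdm_empty)
    have "(\<lambda>k. norm (\<phi> k x - \<psi> x)) \<longlonglongrightarrow> 0"
      by (rule ennreal_le_sandwich[OF e0 L]) simp
    then have t0: "(\<lambda>k. \<phi> k x) \<longlonglongrightarrow> \<psi> x"
      using tendsto_norm_zero_iff LIM_zero_cancel by blast
    have t1: "(\<lambda>k. pd j (\<phi> k) x) \<longlonglongrightarrow> pd j \<psi> x" for j
    proof -
      have e1: "ennreal (norm (pd j (\<phi> k) x - pd j \<psi> x)) \<le> c2norm \<Omega> (\<lambda>x. \<phi> k x - \<psi> x)" for k
        using c2norm_ge[of "{#j#}" x \<Omega> "\<lambda>x. \<phi> k x - \<psi> x"] x pd_diff_Ck[OF phi1 psi1 x]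
        by (simp add: pdm_single)
      have "(\<lambda>k. norm (pd j (\<phi> k) x - pd j \<psi> x)) \<longlonglongrightarrow> 0"
        by (rule ennreal_le_sandwich[OF e1 L]) simp
      then show ?thesis using tendsto_norm_zero_iff LIM_zero_cancel by blast
    qed
    have t2: "(\<lambda>k. divm (\<phi> k) x) \<longlonglongrightarrow> divm \<psi> x"
      unfolding divm_def by (intro tendsto_intros t1)
    have "lr_mat r (\<psi> x) \<le> \<alpha>0 x"
      by (rule LIMSEQ_le_const2[OF isCont_tendsto_compose[OF cm t0]]) (use S x in auto)
    moreover have "lr_vec r (divm \<psi> x) \<le> \<alpha>1 x"
      by (rule LIMSEQ_le_const2[OF isCont_tendsto_compose[OF cv t2]]) (use S x in auto)
    ultimately show ?thesis by simp
  qed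
  then show ?thesis using C by auto
qed



lemma sup_dir:
  fixes \<Omega> :: "(real^'n::finite) set" and r :: ereal and \<alpha>0 \<alpha>1 :: "real^'n \<Rightarrow> real" and \<alpha>_low :: real
  assumes op: "open \<Omega>" and r: "1 \<le> r" and al: "\<alpha>_low > 0"
    and alx: "\<forall>x\<in>\<Omega>. \<alpha>0 x > \<alpha>_low \<and> \<alpha>1 x > \<alpha>_low"
    and C: "C02 \<Omega> \<psi>" and bd: "\<forall>x\<in>\<Omega>. lr_mat r (\<psi> x) \<le> \<alpha>0 x \<and> lr_vec r (divm \<psi> x) \<le> \<alpha>1 x"
  shows "\<psi> \<in> c2closure \<Omega> {\<phi>. Cc_inf \<Omega> \<phi> \<and> (\<forall>x\<in>\<Omega>. lr_mat r (\<phi> x) \<le> \<alpha>0 x \<and> lr_vec r (divm \<phi> x) \<le> \<alpha>1 x)}"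
proof -
  define S where "S = {\<phi>. Cc_inf \<Omega> \<phi> \<and> (\<forall>x\<in>\<Omega>. lr_mat r (\<phi> x) \<le> \<alpha>0 x \<and> lr_vec r (divm \<phi> x) \<le> \<alpha>1 x)}"
  obtain \<phi> where phiC: "\<And>k. Cc_inf \<Omega> (\<phi> k)" and L: "(\<lambda>k. c2norm \<Omega> (\<lambda>x. \<phi> k x - \<psi> x)) \<longlonglongrightarrow> 0"
    using C unfolding C02_def by auto
  have psi2: "Ck_on 2 \<Omega> \<psi>" using C unfolding C02_def by auto
  have phi2: "Ck_on 2 \<Omega> (\<phi> k)" for k using phiC[of k] unfolding Cc_inf_def smooth_on_def by auto
  have psi1: "Ck_on 1 \<Omega> \<psi>" using Ck_on_mono[OF psi2] by simp
  have phi1: "Ck_on 1 \<Omega> (\<phi> k)" for k using Ck_on_mono[OF phi2] by simp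
  define D where "D k = c2norm \<Omega> (\<lambda>x. \<phi> k x - \<psi> x)" for k
  have Lt: "\<exists>k. D k < ennreal t" if "t > 0" for t
  proof -
    have "eventually (\<lambda>k. D k < ennreal t) sequentially"
      using order_tendstoD(2)[OF L, of "ennreal t"] that unfolding D_def by simp
    then show ?thesis unfolding eventually_sequentially by auto
  qed
  obtain k0 where k0: "D k0 < 1" using Lt[of 1] by auto
  have Mfin: "c2norm \<Omega> \<psi> < top"
  proof -
    have "c2norm \<Omega> \<psi> \<le> c2norm \<Omega> (\<lambda>x. \<phi> k0 x - \<psi> x) + ennreal 1 * c2norm \<Omega> (\<phi> k0)"
    proof (rule c2norm_le)
      fix \<beta> :: "'n multiset" and x assume b: "size \<beta> \<le> 2" and x: "x \<in> \<Omega>"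
      have "pdm \<beta> (\<lambda>x. \<phi> k0 x - \<psi> x) x = pdm \<beta> (\<phi> k0) x - pdm \<beta> \<psi> x"
        using pdm_lin[OF op phi2 psi2 b x, where a=1 and b="-1"] by simp
      then show "norm (pdm \<beta> \<psi> x) \<le> norm (pdm \<beta> (\<lambda>x. \<phi> k0 x - \<psi> x) x) + 1 * norm (pdm \<beta> (\<phi> k0) x)"
        using norm_triangle_ineq4[of "pdm \<beta> (\<phi> k0) x" "pdm \<beta> (\<phi> k0) x - pdm \<beta> \<psi> x"] by simp
    qed simp
    moreover have "c2norm \<Omega> (\<phi> k0) < top" using Cc_inf_c2norm_finite[OF op phiC] by simp
    moreover have "c2norm \<Omega> (\<lambda>x. \<phi> k0 x - \<psi> x) < top" using k0 D_def
      by (metis ennreal_1 ennreal_less_top less_trans)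
    ultimately show ?thesis by (simp add: le_less_trans)
  qed
  obtain B where MB: "c2norm \<Omega> \<psi> = ennreal B" and B0: "0 \<le> B"
    using Mfin less_top_ennreal by blast
  define N where "N = real CARD('n)"
  have N0: "0 \<le> N" unfolding N_def by simp
  have psiB: "norm (\<psi> x) \<le> B" if "x \<in> \<Omega>" for x
    using c2norm_ge[of "{#}" x \<Omega> \<psi>] that MB B0 by (simp add: pdm_empty)
  have pdB: "norm (pd j \<psi> x) \<le> B" if "x \<in> \<Omega>" for x j
    using c2norm_ge[of "{#j#}" x \<Omega> \<psi>] that MB B0 by (simp add: pdm_single)
  have divB: "norm (divm \<psi> x) \<le> N * (N * B)" if "x \<in> \<Omega>" for x
    unfolding divm_def N_def by (rule divm_bound) (use pdB that in auto)
  define R where "R = B + N * (N * B) + 1"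
  have UCm: "uniformly_continuous_on (cball 0 R) (lr_mat r :: real^'n^'n \<Rightarrow> real)"
    by (rule compact_uniformly_continuous[OF continuous_on_subset[OF lr_mat_cont[OF r]]]) auto
  have UCv: "uniformly_continuous_on (cball 0 R) (lr_vec r :: real^'n \<Rightarrow> real)"
    by (rule compact_uniformly_continuous[OF continuous_on_subset[OF lr_vec_cont[OF r]]]) auto
  have step: "\<exists>k. D k < ennreal (1 / (real m + 2)) \<and> (\<lambda>y. (1 - 1 / (real m + 2)) *\<^sub>R \<phi> k y) \<in> S" for m :: nat
  proof -
    define e where "e = 1 / (real m + 2)"
    have e0: "0 < e" "e < 1" unfolding e_def by (auto simp: field_simps)
    have eta: "e * \<alpha>_low > 0" using e0 al by simp
    obtain d1 where d1: "d1 > 0" "\<forall>A\<in>cball (0::real^'n^'n) R. \<forall>A'\<in>cball 0 R. dist A' A < d1 \<longrightarrow>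
        dist (lr_mat r A') (lr_mat r A) < e * \<alpha>_low"
      using mp[OF spec[OF UCm[unfolded uniformly_continuous_on_def], of "e * \<alpha>_low"] eta] by (elim exE conjE) auto
    obtain d2 where d2: "d2 > 0" "\<forall>A\<in>cball (0::real^'n) R. \<forall>A'\<in>cball 0 R. dist A' A < d2 \<longrightarrow>
        dist (lr_vec r A') (lr_vec r A) < e * \<alpha>_low"
      using mp[OF spec[OF UCv[unfolded uniformly_continuous_on_def], of "e * \<alpha>_low"] eta] by (elim exE conjE) auto
    define d where "d = min (min d1 d2) 1"
    have d: "0 < d" "d \<le> d1" "d \<le> d2" "d \<le> 1" unfolding d_def using d1 d2 by auto
    define t where "t = min (d / (N * N + 1)) e"
    have t: "0 < t" "t \<le> e" "N * (N * t) < d" "t \<le> d"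
    proof -
      show "0 < t" unfolding t_def using d e0 N0 by (simp add: add_nonneg_pos)
      show "t \<le> e" unfolding t_def by simp
      have tle: "t \<le> d / (N * N + 1)" unfolding t_def by simp
      have NN: "0 \<le> N * N" using N0 by simp
      have "N * (N * t) \<le> N * N * (d / (N * N + 1))" using mult_left_mono[OF tle NN] by (simp add: mult.assoc)
      also have "\<dots> < d" using frac_aux[OF NN d(1)] by simp
      finally show "N * (N * t) < d" .
      have "d / (N * N + 1) \<le> d" using frac_aux2[OF NN d(1)] .
      then show "t \<le> d" using tle by simp
    qed
    obtain k where k: "D k < ennreal t" using Lt[OF t(1)] by auto
    define \<Phi> where "\<Phi> = (\<lambda>y. (1 - e) *\<^sub>R \<phi> k y)"
    have "Cc_inf \<Omega> \<Phi>" unfolding \<Phi>_def using Cc_inf_scale[OF op phiC] e0 by simp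
    moreover have "lr_mat r (\<Phi> x) \<le> \<alpha>0 x \<and> lr_vec r (divm \<Phi> x) \<le> \<alpha>1 x" if x: "x \<in> \<Omega>" for x
    proof -
      have n0: "norm (\<phi> k x - \<psi> x) < t"
      proof -
        have "ennreal (norm (\<phi> k x - \<psi> x)) < ennreal t"
          using c2norm_ge[of "{#}" x \<Omega> "\<lambda>x. \<phi> k x - \<psi> x"] x k D_def
          by (simp add: pdm_empty le_less_trans)
        then show ?thesis by (simp add: ennreal_less_iff)
      qed
      have n1: "norm (pd j (\<phi> k) x - pd j \<psi> x) \<le> t" for j
      proof -
        have "ennreal (norm (pd j (\<phi> k) x - pd j \<psi> x)) < ennreal t"
          using c2norm_ge[of "{#j#}" x \<Omega> "\<lambda>x. \<phi> k x - \<psi> x"] x k D_def pd_diff_Ck[OF phi1 psi1 x]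
          by (simp add: pdm_single le_less_trans)
        then show ?thesis by (simp add: ennreal_less_iff)
      qed
      have n2: "norm (divm (\<phi> k) x - divm \<psi> x) < d"
        unfolding divm_diff using divm_bound[of "\<lambda>j. pd j (\<phi> k) x - pd j \<psi> x" t, OF n1] t N_def
        by simp
      have inR: "\<psi> x \<in> cball 0 R" "\<phi> k x \<in> cball 0 R" "divm \<psi> x \<in> cball 0 R" "divm (\<phi> k) x \<in> cball 0 R"
      proof -
        have a: "norm (\<psi> x) \<le> B" "norm (divm \<psi> x) \<le> N * (N * B)" using psiB divB x by auto
        have b: "0 \<le> N * (N * B)" using N0 B0 by simp
        have c: "norm (\<phi> k x) \<le> norm (\<psi> x) + norm (\<phi> k x - \<psi> x)" by (metis norm_triangle_sub)
        have c2: "norm (divm (\<phi> k) x) \<le> norm (divm \<psi> x) + norm (divm (\<phi> k) x - divm \<psi> x)"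
          by (metis norm_triangle_sub)
        show "\<psi> x \<in> cball 0 R" "\<phi> k x \<in> cball 0 R" "divm \<psi> x \<in> cball 0 R" "divm (\<phi> k) x \<in> cball 0 R"
          unfolding R_def mem_cball_0 using a b c c2 n0 n2 t d B0 by linarith+
      qed
      have lm: "lr_mat r (\<phi> k x) < \<alpha>0 x + e * \<alpha>_low"
      proof -
        have "dist (lr_mat r (\<phi> k x)) (lr_mat r (\<psi> x)) < e * \<alpha>_low"
          using d1(2) inR n0 t d by (simp add: dist_norm)
        moreover have "lr_mat r (\<psi> x) \<le> \<alpha>0 x \<and> lr_vec r (divm \<psi> x) \<le> \<alpha>1 x" using bd x by auto
        ultimately show ?thesis unfolding dist_real_def abs_less_iff by linarith
      qed
      have lv: "lr_vec r (divm (\<phi> k) x) < \<alpha>1 x + e * \<alpha>_low"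
      proof -
        have "dist (lr_vec r (divm (\<phi> k) x)) (lr_vec r (divm \<psi> x)) < e * \<alpha>_low"
          using d2(2) inR n2 d by (simp add: dist_norm)
        moreover have "lr_mat r (\<psi> x) \<le> \<alpha>0 x \<and> lr_vec r (divm \<psi> x) \<le> \<alpha>1 x" using bd x by auto
        ultimately show ?thesis unfolding dist_real_def abs_less_iff by linarith
      qed
      have "lr_mat r (\<Phi> x) = (1 - e) * lr_mat r (\<phi> k x)"
        unfolding \<Phi>_def using lr_mat_scale[OF r, of "1 - e"] e0 by simp
      also have "\<dots> \<le> (1 - e) * (\<alpha>0 x + e * \<alpha>_low)" using lm e0 by (simp add: mult_left_mono)
      also have "\<dots> \<le> \<alpha>0 x" using arith_aux[of \<alpha>_low "\<alpha>0 x" e] alx x al e0 by simp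
      finally have 1: "lr_mat r (\<Phi> x) \<le> \<alpha>0 x" .
      have "lr_vec r (divm \<Phi> x) = (1 - e) * lr_vec r (divm (\<phi> k) x)"
        unfolding \<Phi>_def using divm_scale[OF phi1 x, of "1 - e"] lr_vec_scale[OF r, of "1 - e"] e0 by simp
      also have "\<dots> \<le> (1 - e) * (\<alpha>1 x + e * \<alpha>_low)" using lv e0 by (simp add: mult_left_mono)
      also have "\<dots> \<le> \<alpha>1 x" using arith_aux[of \<alpha>_low "\<alpha>1 x" e] alx x al e0 by simp
      finally have 2: "lr_vec r (divm \<Phi> x) \<le> \<alpha>1 x" .
      show ?thesis using 1 2 by simp
    qed
    ultimately have "\<Phi> \<in> S" unfolding S_def by simp
    moreover have "D k < ennreal e" using k t(2) by (meson ennreal_leI less_le_trans)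
    ultimately show ?thesis unfolding \<Phi>_def e_def by blast
  qed
  obtain kk where kk: "\<And>m. D (kk m) < ennreal (1 / (real m + 2))"
     "\<And>m. (\<lambda>y. (1 - 1 / (real m + 2)) *\<^sub>R \<phi> (kk m) y) \<in> S"
    using step by metis
  define \<Phi> where "\<Phi> m = (\<lambda>y. (1 - 1 / (real m + 2)) *\<^sub>R \<phi> (kk m) y)" for m
  have bnd: "c2norm \<Omega> (\<lambda>x. \<Phi> m x - \<psi> x) \<le> ennreal (1 / (real m + 2)) + ennreal (1 / (real m + 2)) * ennreal B" for m
  proof -
    define e where "e = 1 / (real m + 2)"
    have e0: "0 \<le> e" "e \<le> 1" unfolding e_def by (auto simp: field_simps)
    have "c2norm \<Omega> (\<lambda>x. \<Phi> m x - \<psi> x) \<le> c2norm \<Omega> (\<lambda>x. \<phi> (kk m) x - \<psi> x) + ennreal e * c2norm \<Omega> \<psi>"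
    proof (rule c2norm_le[OF e0(1)])
      fix \<beta> :: "'n multiset" and x assume b: "size \<beta> \<le> 2" and x: "x \<in> \<Omega>"
      have h: "pdm \<beta> (\<lambda>x. \<Phi> m x - \<psi> x) x = (1 - e) *\<^sub>R pdm \<beta> (\<phi> (kk m)) x - pdm \<beta> \<psi> x"
        using pdm_lin[OF op phi2 psi2 b x, where a="1 - e" and b="-1"] unfolding \<Phi>_def e_def by simp
      have f: "pdm \<beta> (\<lambda>x. \<phi> (kk m) x - \<psi> x) x = pdm \<beta> (\<phi> (kk m)) x - pdm \<beta> \<psi> x"
        using pdm_lin[OF op phi2 psi2 b x, where a=1 and b="-1"] by simp
      show "norm (pdm \<beta> (\<lambda>x. \<Phi> m x - \<psi> x) x) \<le> norm (pdm \<beta> (\<lambda>x. \<phi> (kk m) x - \<psi> x) x) + e * norm (pdm \<beta> \<psi> x)"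
        unfolding h f by (rule norm_aux[OF e0])
    qed
    also have "\<dots> \<le> ennreal e + ennreal e * ennreal B"
      using kk(1)[of m] MB unfolding D_def e_def by (intro add_mono) auto
    finally show ?thesis unfolding e_def .
  qed
  have e_lim: "(\<lambda>m. 1 / (real m + 2)) \<longlonglongrightarrow> 0"
    using LIMSEQ_ignore_initial_segment[OF lim_1_over_n, of 2] by (simp add: add.commute)
  have "(\<lambda>m. ennreal (1 / (real m + 2))) \<longlonglongrightarrow> ennreal 0"
    by (rule tendsto_ennrealI[OF e_lim])
  then have el: "(\<lambda>m. ennreal (1 / (real m + 2))) \<longlonglongrightarrow> 0" by simp
  have "(\<lambda>m. ennreal (1 / (real m + 2)) + ennreal (1 / (real m + 2)) * ennreal B) \<longlonglongrightarrow> 0 + 0 * ennreal B"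
    by (intro tendsto_add tendsto_mult_ennreal el tendsto_const) auto
  then have lim: "(\<lambda>m. ennreal (1 / (real m + 2)) + ennreal (1 / (real m + 2)) * ennreal B) \<longlonglongrightarrow> 0" by simp
  have "(\<lambda>m. c2norm \<Omega> (\<lambda>x. \<Phi> m x - \<psi> x)) \<longlonglongrightarrow> 0"
    by (rule tendsto_sandwich[OF _ _ tendsto_const lim]) (use bnd in auto)
  moreover have "\<forall>m. \<Phi> m \<in> S" using kk(2) unfolding \<Phi>_def by simp
  ultimately show ?thesis unfolding c2closure_def S_def using C by blast
qed


theorem mainTheorem2:
  fixes \<Omega> :: "(real^'n::finite) set"
    and \<alpha>0 \<alpha>1 :: "real^'n \<Rightarrow> real"
    and r :: ereal and \<alpha>_low :: real
  assumes "CARD('n) \<ge> 2"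
    and "open \<Omega>" and "bounded \<Omega>" and "lipschitz_boundary \<Omega>"
    and "1 \<le> r"
    and "continuous_on (closure \<Omega>) \<alpha>0" and "continuous_on (closure \<Omega>) \<alpha>1"
    and "\<alpha>_low > 0" and "\<forall>x\<in>\<Omega>. \<alpha>0 x > \<alpha>_low \<and> \<alpha>1 x > \<alpha>_low"
  shows "c2closure \<Omega> {\<phi>. Cc_inf \<Omega> \<phi> \<and>
            (\<forall>x\<in>\<Omega>. lr_mat r (\<phi> x) \<le> \<alpha>0 x \<and> lr_vec r (divm \<phi> x) \<le> \<alpha>1 x)}
       = {\<psi>. C02 \<Omega> \<psi> \<and>
            (\<forall>x\<in>\<Omega>. lr_mat r (\<psi> x) \<le> \<alpha>0 x \<and> lr_vec r (divm \<psi> x) \<le> \<alpha>1 x)}"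
proof (rule set_eqI, rule iffI)
  fix \<psi> assume "\<psi> \<in> c2closure \<Omega> {\<phi>. Cc_inf \<Omega> \<phi> \<and>
            (\<forall>x\<in>\<Omega>. lr_mat r (\<phi> x) \<le> \<alpha>0 x \<and> lr_vec r (divm \<phi> x) \<le> \<alpha>1 x)}"
  then show "\<psi> \<in> {\<psi>. C02 \<Omega> \<psi> \<and>
            (\<forall>x\<in>\<Omega>. lr_mat r (\<psi> x) \<le> \<alpha>0 x \<and> lr_vec r (divm \<psi> x) \<le> \<alpha>1 x)}"
    using sub_dir[OF assms(2) assms(5)] by blast
next
  fix \<psi> assume "\<psi> \<in> {\<psi>. C02 \<Omega> \<psi> \<and>
            (\<forall>x\<in>\<Omega>. lr_mat r (\<psi> x) \<le> \<alpha>0 x \<and> lr_vec r (divm \<psi> x) \<le> \<alpha>1 x)}"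
  then show "\<psi> \<in> c2closure \<Omega> {\<phi>. Cc_inf \<Omega> \<phi> \<and>
            (\<forall>x\<in>\<Omega>. lr_mat r (\<phi> x) \<le> \<alpha>0 x \<and> lr_vec r (divm \<phi> x) \<le> \<alpha>1 x)}"
    using sup_dir[OF assms(2) assms(5) assms(8) assms(9)] by blast
qed

end
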